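(* Let $S$ be a numerical semigroup with multiplicity $m(S) = 3$, and let its Apéry set with respect to $3$ be $\{0,a_1,a_2\}$, where for $i=1,2$, $a_i$ is the smallest element of $S$ with $a_i \equiv i \pmod{3}$. (a) If $|a_1-a_2|\leq 2$, then $\dim_{\mathrm{mat}} S=2$. (b) If $|a_1-a_2| > 2$, then $\dim_{\mathrm{mat}} S=3$.
   Context: $\mathbb{N} = \{0,1,2,\ldots\}$. A numerical semigroup is an additive subsemigroup of $\mathbb{N}$ containing $0$ with finite complement in $\mathbb{N}$; its multiplicity $m(S)$ is its smallest nonzero element. $\mathsf{M}_d(X)$ denotes the $d\times d$ matrices with entries in $X$. For $A \in \mathsf{M}_d(\mathbb{Q})$, $\mathcal{S}(A) = \{ n \in \mathbb{N} : A^n \in \mathsf{M}_d(\mathbb{Z})\}$. The matricial dimension $\dim_{\mathrm{mat}} S$ is the smallest $d$ such that $S = \mathcal{S}(A)$ for some $A \in \mathsf{M}_d(\mathbb{Q})$. *)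

theory Defs
  imports Main "Jordan_Normal_Form.Matrix"
begin

definition numerical_semigroup :: "nat set \<Rightarrow> bool" where
  "numerical_semigroup S \<longleftrightarrow> 0 \<in> S \<and> (\<forall>x\<in>S. \<forall>y\<in>S. x + y \<in> S) \<and> finite (UNIV - S)"

definition multiplicity_ns :: "nat set \<Rightarrow> nat" where
  "multiplicity_ns S = (LEAST x. x \<in> S \<and> x \<noteq> 0)"

definition int_mat :: "rat mat \<Rightarrow> bool" where
  "int_mat B \<longleftrightarrow> (\<forall>i<dim_row B. \<forall>j<dim_col B. B $$ (i, j) \<in> \<int>)"

definition S_of :: "rat mat \<Rightarrow> nat set" where
  "S_of A = {n. int_mat (A ^\<^sub>m n)}"

definition dim_mat :: "nat set \<Rightarrow> nat" where
  "dim_mat S = (LEAST d. \<exists>A \<in> carrier_mat d d. S = S_of A)"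

end

theory Submission
  imports Defs
begin


lemma less2: "(i::nat) < 2 \<longleftrightarrow> i = 0 \<or> i = 1" by auto
lemma less3: "(i::nat) < 3 \<longleftrightarrow> i = 0 \<or> i = 1 \<or> i = 2" by auto

lemma mult2:
  assumes "A \<in> carrier_mat 2 2" "B \<in> carrier_mat 2 2" "i < 2" "j < 2"
  shows "(A * B) $$ (i,j) = A $$ (i,0) * B $$ (0,j) + A $$ (i,1) * B $$ (1,j)"
  using assms by (simp add: scalar_prod_def numeral_2_eq_2)

lemma mult3:
  assumes "A \<in> carrier_mat 3 3" "B \<in> carrier_mat 3 3" "i < 3" "j < 3"
  shows "(A * B) $$ (i,j) = A $$ (i,0) * B $$ (0,j) + A $$ (i,1) * B $$ (1,j) + A $$ (i,2) * B $$ (2,j)"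
  using assms by (simp add: scalar_prod_def numeral_3_eq_3 numeral_2_eq_2)

lemma pow1: "A \<in> carrier_mat n n \<Longrightarrow> A ^\<^sub>m 1 = (A :: rat mat)"
  by simp

lemma pow_add: assumes "(A :: rat mat) \<in> carrier_mat k k"
  shows "A ^\<^sub>m (m + n) = A ^\<^sub>m m * A ^\<^sub>m n"
proof (induction n)
  case 0 then show ?case using assms by simp
next
  case (Suc n)
  have "A ^\<^sub>m (m + Suc n) = A ^\<^sub>m (m + n) * A" by simp
  also have "\<dots> = (A ^\<^sub>m m * A ^\<^sub>m n) * A" using Suc by simp
  also have "\<dots> = A ^\<^sub>m m * (A ^\<^sub>m n * A)"
    using assms by (intro assoc_mult_mat) auto
  finally show ?case by simp
qed

lemma pow_period:
  assumes A: "(A :: rat mat) \<in> carrier_mat k k" and A3: "A ^\<^sub>m 3 = c \<cdot>\<^sub>m 1\<^sub>m k"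
    and "i < k" "j < k"
  shows "(A ^\<^sub>m (r + 3 * q)) $$ (i,j) = c ^ q * (A ^\<^sub>m r) $$ (i,j)"
proof (induction q)
  case 0 then show ?case by simp
next
  case (Suc q)
  have "A ^\<^sub>m (r + 3 * Suc q) = A ^\<^sub>m (r + 3 * q) * A ^\<^sub>m 3"
    using pow_add[OF A, of "r + 3*q" 3] by (simp add: algebra_simps)
  also have "\<dots> = c \<cdot>\<^sub>m (A ^\<^sub>m (r + 3 * q) * 1\<^sub>m k)"
    unfolding A3 using A by (intro mult_smult_distrib) auto
  also have "\<dots> = c \<cdot>\<^sub>m (A ^\<^sub>m (r + 3 * q))" using A by simp
  finally show ?case using Suc assms by simp
qed

lemma rat_cubic_int:
  fixes x p r :: rat
  assumes "p \<in> \<int>" "r \<in> \<int>" "x ^ 3 + p * x + r = 0"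
  shows "x \<in> \<int>"
proof -
  obtain a b where q: "quotient_of x = (a, b)" by (cases "quotient_of x") auto
  have b0: "b > 0" using q quotient_of_denom_pos by blast
  have cop: "coprime a b" using q quotient_of_coprime by blast
  have xd: "x = of_int a / of_int b" using q quotient_of_div by blast
  obtain p' where p': "p = of_int p'" using assms(1) Ints_cases by blast
  obtain r' where r': "r = of_int r'" using assms(2) Ints_cases by blast
  have "of_int (a^3 + p' * a * b^2 + r' * b^3) = (of_int b)^3 * (x ^ 3 + p * x + r)"
    using b0 unfolding xd p' r' by (simp add: field_simps power3_eq_cube power2_eq_square)
  also have "\<dots> = (0::rat)" using assms(3) by simp
  finally have "a^3 + p' * a * b^2 + r' * b^3 = 0" by linarith
  hence "a^3 = b * (- p' * a * b - r' * b^2)" by (simp add: algebra_simps power2_eq_square power3_eq_cube)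
  hence d3: "b dvd a^3" by (metis dvd_triv_left)
  have c3: "coprime b (a^3)" using cop by (simp add: coprime_commute)
  have "is_unit b" using coprime_common_divisor[OF c3 dvd_refl d3] .
  hence "b = 1" using b0 by simp
  thus ?thesis using xd by simp
qed



lemma int_mat2: "B \<in> carrier_mat 2 2 \<Longrightarrow> int_mat B \<longleftrightarrow>
   B $$ (0,0) \<in> \<int> \<and> B $$ (0,1) \<in> \<int> \<and> B $$ (1,0) \<in> \<int> \<and> B $$ (1,1) \<in> \<int>"
  unfolding int_mat_def by (auto simp: less2)

lemma int_mat3: "B \<in> carrier_mat 3 3 \<Longrightarrow> int_mat B \<longleftrightarrow>
   (\<forall>i\<in>{0,1,2}. \<forall>j\<in>{0,1,2}. B $$ (i,j) \<in> \<int>)"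
  unfolding int_mat_def by (auto simp: less3)

lemma dim0: "A \<in> carrier_mat 0 0 \<Longrightarrow> n \<in> S_of A"
  unfolding S_of_def int_mat_def by simp

lemma dim1: assumes A: "A \<in> carrier_mat 1 1" and "3 \<in> S_of A" shows "n \<in> S_of A"
proof -
  have pw: "(A ^\<^sub>m k) $$ (0,0) = (A $$ (0,0)) ^ k" for k
    by (induction k) (use A in \<open>auto simp: scalar_prod_def\<close>)
  have eq: "(A $$ (0,0)) ^ 3 + 0 * A $$ (0,0) + (- ((A ^\<^sub>m 3) $$ (0,0))) = 0" by (simp add: pw)
  have "int_mat (A ^\<^sub>m 3)" using assms(2) by (simp add: S_of_def)
  hence I: "(A ^\<^sub>m 3) $$ (0,0) \<in> \<int>" using A unfolding int_mat_def by auto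
  have "A $$ (0,0) \<in> \<int>" by (rule rat_cubic_int[OF _ _ eq]) (use I in auto)
  hence "(A $$ (0,0)) ^ n \<in> \<int>" by simp
  thus ?thesis using A unfolding S_of_def int_mat_def by (auto simp: pw)
qed

lemma rec2_arith:
  fixes m0 m1 a b c d :: rat
  shows "(m0*a+m1*c)*a + (m0*b+m1*d)*c = (a+d)*(m0*a+m1*c) - (a*d-b*c)*m0"
    "(m0*a+m1*c)*b + (m0*b+m1*d)*d = (a+d)*(m0*b+m1*d) - (a*d-b*c)*m1"
  by (simp_all add: algebra_simps)

lemma rec2: fixes M A :: "rat mat" assumes M: "M \<in> carrier_mat 2 2" and A: "A \<in> carrier_mat 2 2" and ij: "i < 2" "j < 2"
  shows "((M * A) * A) $$ (i,j) = (A $$ (0,0) + A $$ (1,1)) * (M * A) $$ (i,j)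
           - (A $$ (0,0) * A $$ (1,1) - A $$ (0,1) * A $$ (1,0)) * M $$ (i,j)"
proof -
  have MA: "M * A \<in> carrier_mat 2 2" using M A by simp
  have e0: "(M * A) $$ (i,0) = M $$ (i,0) * A $$ (0,0) + M $$ (i,1) * A $$ (1,0)"
    using mult2[OF M A ij(1), of 0] by simp
  have e1: "(M * A) $$ (i,1) = M $$ (i,0) * A $$ (0,1) + M $$ (i,1) * A $$ (1,1)"
    using mult2[OF M A ij(1), of 1] by simp
  have f: "((M * A) * A) $$ (i,j) = (M * A) $$ (i,0) * A $$ (0,j) + (M * A) $$ (i,1) * A $$ (1,j)"
    using mult2[OF MA A ij] .
  have j: "j = 0 \<or> j = 1" using ij by auto
  then show ?thesis
  proof
    assume j0: "j = 0" 
    from f show ?thesis unfolding j0 e0 e1 using rec2_arith(1)[of "M $$ (i,0)" "A $$ (0,0)" "M $$ (i,1)" "A $$ (1,0)" "A $$ (0,1)" "A $$ (1,1)"] by simp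
  next
    assume j0: "j = 1" 
    from f show ?thesis unfolding j0 e0 e1 using rec2_arith(2)[of "M $$ (i,0)" "A $$ (0,0)" "M $$ (i,1)" "A $$ (1,0)" "A $$ (0,1)" "A $$ (1,1)"] by simp
  qed
qed

lemma dim2: assumes A: "A \<in> carrier_mat 2 2" and "3 \<in> S_of A"
  and n: "n \<in> S_of A" "Suc n \<in> S_of A" shows "n + k \<in> S_of A"
proof -
  define a where "a = A $$ (0,0)"
  define b where "b = A $$ (0,1)"
  define c where "c = A $$ (1,0)"
  define d where "d = A $$ (1,1)"
  define t where "t = a + d"
  define e where "e = a * d - b * c"
  have P: "A ^\<^sub>m 3 = (A * A) * A" using A by (simp add: numeral_3_eq_3 del: assoc_mult_mat)
  have AA: "A * A \<in> carrier_mat 2 2" using A by simp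
  have E: "(A ^\<^sub>m 3) $$ (i,j) = (A * A) $$ (i,0) * A $$ (0,j) + (A * A) $$ (i,1) * A $$ (1,j)"
    if "i < 2" "j < 2" for i j unfolding P using mult2[OF AA A that] .
  have I: "(A ^\<^sub>m 3) $$ (i,j) \<in> \<int>" if "i < 2" "j < 2" for i j
    using assms(2) that A unfolding S_of_def int_mat_def by auto
  have X00: "(A ^\<^sub>m 3) $$ (0,0) = (a*a+b*c)*a + (a*b+b*d)*c"
    using E[of 0 0] mult2[OF A A] unfolding a_def b_def c_def d_def by simp
  have X01: "(A ^\<^sub>m 3) $$ (0,1) = (a*a+b*c)*b + (a*b+b*d)*d"
    using E[of 0 1] mult2[OF A A] unfolding a_def b_def c_def d_def by simp
  have X10: "(A ^\<^sub>m 3) $$ (1,0) = (c*a+d*c)*a + (c*b+d*d)*c"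
    using E[of 1 0] mult2[OF A A] unfolding a_def b_def c_def d_def by simp
  have X11: "(A ^\<^sub>m 3) $$ (1,1) = (c*a+d*c)*b + (c*b+d*d)*d"
    using E[of 1 1] mult2[OF A A] unfolding a_def b_def c_def d_def by simp
  have "e ^ 3 = (A ^\<^sub>m 3) $$ (0,0) * (A ^\<^sub>m 3) $$ (1,1) - (A ^\<^sub>m 3) $$ (0,1) * (A ^\<^sub>m 3) $$ (1,0)"
    unfolding X00 X01 X10 X11 e_def by (simp add: power3_eq_cube algebra_simps)
  hence e3: "e ^ 3 \<in> \<int>" using I by simp
  have eI: "e \<in> \<int>" by (rule rat_cubic_int[of "0" "- (e ^ 3)" e]) (use e3 in auto)
  have t3: "t ^ 3 + (-3 * e) * t + (- ((A ^\<^sub>m 3) $$ (0,0) + (A ^\<^sub>m 3) $$ (1,1))) = 0"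
    unfolding X00 X11 e_def t_def by (simp add: power3_eq_cube algebra_simps)
  have p3: "-3 * e \<in> \<int>" using eI by simp
  have r3: "- ((A ^\<^sub>m 3) $$ (0,0) + (A ^\<^sub>m 3) $$ (1,1)) \<in> \<int>" using I by simp
  have tI: "t \<in> \<int>" by (rule rat_cubic_int[OF p3 r3 t3])
  have rec: "(A ^\<^sub>m (m + 2)) $$ (i,j) = t * (A ^\<^sub>m (m+1)) $$ (i,j) - e * (A ^\<^sub>m m) $$ (i,j)"
    if "i < 2" "j < 2" for m i j
  proof -
    have M: "A ^\<^sub>m m \<in> carrier_mat 2 2" using A by simp
    have q1: "A ^\<^sub>m (m + 2) = (A ^\<^sub>m m * A) * A" by (simp add: numeral_2_eq_2 del: assoc_mult_mat)
    have q2: "A ^\<^sub>m (m + 1) = A ^\<^sub>m m * A" by simp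
    show ?thesis unfolding q1 q2 rec2[OF M A that] t_def e_def a_def b_def c_def d_def ..
  qed
  have "n + k \<in> S_of A \<and> Suc (n + k) \<in> S_of A"
  proof (induction k)
    case 0 then show ?case using n by simp
  next
    case (Suc k)
    have "int_mat (A ^\<^sub>m (n + k + 2))"
      unfolding int_mat_def
    proof (intro allI impI)
      fix i j assume ij: "i < dim_row (A ^\<^sub>m (n + k + 2))" "j < dim_col (A ^\<^sub>m (n + k + 2))"
      hence ij': "i < 2" "j < 2" using A by auto
      have "int_mat (A ^\<^sub>m (n+k+1))" "int_mat (A ^\<^sub>m (n+k))" using Suc by (simp_all add: S_of_def)
      hence "(A ^\<^sub>m (n+k+1)) $$ (i,j) \<in> \<int>" "(A ^\<^sub>m (n+k)) $$ (i,j) \<in> \<int>"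
        using ij' A unfolding int_mat_def by auto
      thus "(A ^\<^sub>m (n + k + 2)) $$ (i, j) \<in> \<int>" unfolding rec[OF ij'] using tI eI by simp
    qed
    thus ?case using Suc by (simp add: S_of_def)
  qed
  thus ?thesis by simp
qed



definition pint :: "int \<Rightarrow> rat" where "pint k = 2 powi k"

lemma pint_add: "pint (a + b) = pint a * pint b"
  unfolding pint_def by (simp add: power_int_add)

lemma pint_8: "(8::rat) ^ q * pint k = pint (3 * int q + k)"
proof -
  have "3 * int q = int (3 * q)" by simp
  hence "pint (3 * int q) = 2 ^ (3 * q)" unfolding pint_def by (simp only: power_int_of_nat)
  also have "\<dots> = 8 ^ q" by (simp add: power_mult)
  finally have "pint (3 * int q) = 8 ^ q" .
  thus ?thesis by (simp add: pint_add)
qed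

lemma pint_Ints: "pint k \<in> \<int> \<longleftrightarrow> k \<ge> 0"
proof
  assume "k \<ge> 0"
  hence "pint k = 2 ^ nat k" unfolding pint_def by (simp add: power_int_def)
  thus "pint k \<in> \<int>" by simp
next
  assume I: "pint k \<in> \<int>"
  show "k \<ge> 0"
  proof (rule ccontr)
    assume "\<not> k \<ge> 0"
    hence pk: "pint k = inverse (2 ^ nat (-k))" unfolding pint_def power_int_def by (simp add: power_one_over inverse_eq_divide)
    have "(1::rat) < 2 ^ nat (-k)" using \<open>\<not> k \<ge> 0\<close> by (intro one_less_power) auto
    hence lt: "0 < pint k" "pint k < 1" unfolding pk using inverse_less_1_iff by auto
    obtain m where m: "pint k = of_int m" using I Ints_cases by blast
    have "0 < m" "m < 1" using lt unfolding m by simp_all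
    thus False by simp
  qed
qed

lemma pint_pos: "pint k > 0" unfolding pint_def by simp



definition M2 :: "int \<Rightarrow> rat mat" where
  "M2 e = mat 2 2 (\<lambda>(i,j). if i = 0 then (if j = 0 then 0 else - pint (1 - e))
                            else (if j = 0 then pint (e + 1) else -2))"

lemma M2_carrier: "M2 e \<in> carrier_mat 2 2" unfolding M2_def by simp

lemma M2_dim: "dim_row (M2 e) = 2" "dim_col (M2 e) = 2" unfolding M2_def by simp_all

lemma M2_entries: "M2 e $$ (0,0) = 0" "M2 e $$ (0,1) = - pint (1 - e)"
   "M2 e $$ (1,0) = pint (e + 1)" "M2 e $$ (1,1) = -2"
  unfolding M2_def by simp_all

lemma pint2: "pint 2 = 4" "pint 3 = 8" "pint 1 = 2" unfolding pint_def by simp_all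

lemma M2_sq: "(M2 e * M2 e) $$ (0,0) = -4" "(M2 e * M2 e) $$ (0,1) = pint (2 - e)"
   "(M2 e * M2 e) $$ (1,0) = - pint (e + 2)" "(M2 e * M2 e) $$ (1,1) = 0"
proof -
  have a: "pint (1 - e) * pint (e + 1) = 4" using pint_add[of "1-e" "e+1"] pint2 by simp
  have b: "2 * pint (1 - e) = pint (2 - e)" using pint_add[of 1 "1-e"] pint2 by simp
  have c: "2 * pint (e + 1) = pint (e + 2)" using pint_add[of 1 "e+1"] pint2
    by (simp add: add.commute)
  show "(M2 e * M2 e) $$ (0,0) = -4" "(M2 e * M2 e) $$ (0,1) = pint (2 - e)"
   "(M2 e * M2 e) $$ (1,0) = - pint (e + 2)" "(M2 e * M2 e) $$ (1,1) = 0"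
    by (simp_all add: mult2[OF M2_carrier M2_carrier] M2_entries M2_entries[unfolded One_nat_def] a b[symmetric] c[symmetric] mult.commute)
qed

lemma M2_cube: "M2 e ^\<^sub>m 3 = 8 \<cdot>\<^sub>m 1\<^sub>m 2"
proof -
  have P: "M2 e ^\<^sub>m 3 = (M2 e * M2 e) * M2 e" using M2_carrier
    by (simp add: numeral_3_eq_3 del: assoc_mult_mat)
  have MM: "M2 e * M2 e \<in> carrier_mat 2 2" by (rule mult_carrier_mat[OF M2_carrier M2_carrier])
  have a: "pint (2 - e) * pint (e + 1) = 8" using pint_add[of "2-e" "e+1"] pint2 by simp
  have b: "pint (2 - e) * 2 = 4 * pint (1 - e)" using pint_add[of 1 "1-e"] pint_add[of 1 "2-e"] pint2
    by (simp add: algebra_simps)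
  have c: "pint (e + 2) * pint (1 - e) = 8" using pint_add[of "e+2" "1-e"] pint2 by simp
  show ?thesis
  proof (rule eq_matI)
    fix i j assume ij: "i < dim_row (8 \<cdot>\<^sub>m 1\<^sub>m 2 :: rat mat)" "j < dim_col (8 \<cdot>\<^sub>m 1\<^sub>m 2 :: rat mat)"
    hence ij: "i < 2" "j < 2" by auto
    show "(M2 e ^\<^sub>m 3) $$ (i, j) = (8 \<cdot>\<^sub>m 1\<^sub>m 2) $$ (i, j)"
      unfolding P mult2[OF MM M2_carrier ij] using ij
      by (auto simp: less2 M2_sq M2_entries M2_sq[unfolded One_nat_def] M2_entries[unfolded One_nat_def] a b c)
  qed (simp_all add: M2_dim)
qed

lemma S_of_M2: assumes e: "e \<ge> 1" shows "S_of (M2 e) = {n. n mod 3 = 0 \<or> int n \<ge> e}"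
proof -
  have key: "int_mat (M2 e ^\<^sub>m n) \<longleftrightarrow> n mod 3 = 0 \<or> int n \<ge> e" for n
  proof -
    define q where "q = n div 3"
    define r where "r = n mod 3"
    have n: "n = r + 3 * q" unfolding q_def r_def by simp
    have ent: "(M2 e ^\<^sub>m n) $$ (i,j) = 8 ^ q * (M2 e ^\<^sub>m r) $$ (i,j)" if "i < 2" "j < 2" for i j
      unfolding n using pow_period[OF M2_carrier M2_cube that] .
    have im: "int_mat (M2 e ^\<^sub>m n) \<longleftrightarrow> 8 ^ q * (M2 e ^\<^sub>m r) $$ (0,0) \<in> \<int> \<and> 8 ^ q * (M2 e ^\<^sub>m r) $$ (0,1) \<in> \<int>
       \<and> 8 ^ q * (M2 e ^\<^sub>m r) $$ (1,0) \<in> \<int> \<and> 8 ^ q * (M2 e ^\<^sub>m r) $$ (1,1) \<in> \<int>"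
      using int_mat2[of "M2 e ^\<^sub>m n"] M2_carrier by (simp add: ent M2_dim)
    have r3: "r = 0 \<or> r = 1 \<or> r = 2" unfolding r_def by auto
    have c0: ?thesis if r: "r = 0"
    proof -
      have nm: "n mod 3 = 0" using r r_def by simp
      have "M2 e ^\<^sub>m r = 1\<^sub>m 2" using r by (simp add: M2_dim)
      thus ?thesis unfolding im nm by simp
    qed
    have c1: ?thesis if r: "r = 1"
    proof -
      have nm: "n mod 3 = 1" using r r_def by simp
      have ni: "int n = 3 * int q + 1" using n r by simp
      have "M2 e ^\<^sub>m r = M2 e" using r M2_carrier by simp
      thus ?thesis unfolding im nm ni using e
        by (simp add: M2_entries M2_entries[unfolded One_nat_def] pint_8 pint_Ints) linarith
    qed
    have c2: ?thesis if r: "r = 2"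
    proof -
      have nm: "n mod 3 = 2" using r r_def by simp
      have ni: "int n = 3 * int q + 2" using n r by simp
      have "M2 e ^\<^sub>m r = M2 e * M2 e" using r M2_carrier by (simp add: numeral_2_eq_2)
      thus ?thesis unfolding im nm ni using e
        by (simp add: M2_sq M2_sq[unfolded One_nat_def] pint_8 pint_Ints) linarith
    qed
    show ?thesis using r3 c0 c1 c2 by fast
  qed
  show ?thesis unfolding S_of_def using key by (simp only: mem_Collect_eq)
qed



definition M3 :: "int \<Rightarrow> int \<Rightarrow> int \<Rightarrow> rat mat" where
  "M3 a b c = mat 3 3 (\<lambda>(i,j). if i = 0 \<and> j = 2 then pint a else if i = 1 \<and> j = 0 then pint b
      else if i = 2 \<and> j = 1 then pint c else 0)"

lemma M3_carrier: "M3 a b c \<in> carrier_mat 3 3" unfolding M3_def by simp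
lemma M3_dim: "dim_row (M3 a b c) = 3" "dim_col (M3 a b c) = 3" unfolding M3_def by simp_all

lemma M3_entries:
  "M3 a b c $$ (0,0) = 0" "M3 a b c $$ (0,1) = 0" "M3 a b c $$ (0,2) = pint a"
  "M3 a b c $$ (1,0) = pint b" "M3 a b c $$ (1,1) = 0" "M3 a b c $$ (1,2) = 0"
  "M3 a b c $$ (2,0) = 0" "M3 a b c $$ (2,1) = pint c" "M3 a b c $$ (2,2) = 0"
  unfolding M3_def by simp_all

lemmas M3_entries' = M3_entries M3_entries[unfolded One_nat_def]

lemma int_mat3': "B \<in> carrier_mat 3 3 \<Longrightarrow> int_mat B \<longleftrightarrow>
   B $$ (0,0) \<in> \<int> \<and> B $$ (0,1) \<in> \<int> \<and> B $$ (0,2) \<in> \<int> \<and>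
   B $$ (1,0) \<in> \<int> \<and> B $$ (1,1) \<in> \<int> \<and> B $$ (1,2) \<in> \<int> \<and>
   B $$ (2,0) \<in> \<int> \<and> B $$ (2,1) \<in> \<int> \<and> B $$ (2,2) \<in> \<int>"
  unfolding int_mat_def by (auto simp: less3)

lemma M3_sq:
  "(M3 a b c * M3 a b c) $$ (0,0) = 0" "(M3 a b c * M3 a b c) $$ (0,1) = pint (a + c)"
  "(M3 a b c * M3 a b c) $$ (0,2) = 0"
  "(M3 a b c * M3 a b c) $$ (1,0) = 0" "(M3 a b c * M3 a b c) $$ (1,1) = 0"
  "(M3 a b c * M3 a b c) $$ (1,2) = pint (b + a)"
  "(M3 a b c * M3 a b c) $$ (2,0) = pint (c + b)" "(M3 a b c * M3 a b c) $$ (2,1) = 0"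
  "(M3 a b c * M3 a b c) $$ (2,2) = 0"
  by (simp_all add: mult3[OF M3_carrier M3_carrier] M3_entries' pint_add)

lemmas M3_sq' = M3_sq M3_sq[unfolded One_nat_def]

lemma M3_cube: assumes "a + b + c = 3" shows "M3 a b c ^\<^sub>m 3 = 8 \<cdot>\<^sub>m 1\<^sub>m 3"
proof -
  have P: "M3 a b c ^\<^sub>m 3 = (M3 a b c * M3 a b c) * M3 a b c" using M3_carrier
    by (simp add: numeral_3_eq_3 del: assoc_mult_mat)
  have MM: "M3 a b c * M3 a b c \<in> carrier_mat 3 3" by (rule mult_carrier_mat[OF M3_carrier M3_carrier])
  have p: "pint (a + c) * pint b = 8" "pint (b + a) * pint c = 8" "pint (c + b) * pint a = 8"
    using assms pint2 by (simp_all add: pint_add[symmetric] algebra_simps)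
  show ?thesis
  proof (rule eq_matI)
    fix i j assume ij: "i < dim_row (8 \<cdot>\<^sub>m 1\<^sub>m 3 :: rat mat)" "j < dim_col (8 \<cdot>\<^sub>m 1\<^sub>m 3 :: rat mat)"
    hence ij: "i < 3" "j < 3" by auto
    show "(M3 a b c ^\<^sub>m 3) $$ (i, j) = (8 \<cdot>\<^sub>m 1\<^sub>m 3) $$ (i, j)"
      unfolding P mult3[OF MM M3_carrier ij] using ij
      by (auto simp: less3 M3_sq' M3_entries' p)
  qed (simp_all add: M3_dim)
qed

lemma S_of_M3: assumes abc: "a + b + c = 3"
  shows "int_mat (M3 a b c ^\<^sub>m n) \<longleftrightarrow> n mod 3 = 0
     \<or> (n mod 3 = 1 \<and> 3 * int (n div 3) + a \<ge> 0 \<and> 3 * int (n div 3) + b \<ge> 0 \<and> 3 * int (n div 3) + c \<ge> 0)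
     \<or> (n mod 3 = 2 \<and> 3 * int (n div 3) + a + c \<ge> 0 \<and> 3 * int (n div 3) + b + a \<ge> 0 \<and> 3 * int (n div 3) + c + b \<ge> 0)"
proof -
  define q where "q = n div 3"
  define r where "r = n mod 3"
  have n: "n = r + 3 * q" unfolding q_def r_def by simp
  have ent: "(M3 a b c ^\<^sub>m n) $$ (i,j) = 8 ^ q * (M3 a b c ^\<^sub>m r) $$ (i,j)" if "i < 3" "j < 3" for i j
    unfolding n using pow_period[OF M3_carrier M3_cube[OF abc] that] .
  have im: "int_mat (M3 a b c ^\<^sub>m n) \<longleftrightarrow>
     8 ^ q * (M3 a b c ^\<^sub>m r) $$ (0,0) \<in> \<int> \<and> 8 ^ q * (M3 a b c ^\<^sub>m r) $$ (0,1) \<in> \<int> \<and> 8 ^ q * (M3 a b c ^\<^sub>m r) $$ (0,2) \<in> \<int> \<and>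
     8 ^ q * (M3 a b c ^\<^sub>m r) $$ (1,0) \<in> \<int> \<and> 8 ^ q * (M3 a b c ^\<^sub>m r) $$ (1,1) \<in> \<int> \<and> 8 ^ q * (M3 a b c ^\<^sub>m r) $$ (1,2) \<in> \<int> \<and>
     8 ^ q * (M3 a b c ^\<^sub>m r) $$ (2,0) \<in> \<int> \<and> 8 ^ q * (M3 a b c ^\<^sub>m r) $$ (2,1) \<in> \<int> \<and> 8 ^ q * (M3 a b c ^\<^sub>m r) $$ (2,2) \<in> \<int>"
    using int_mat3'[of "M3 a b c ^\<^sub>m n"] M3_carrier by (simp add: ent M3_dim)
  have r3: "r = 0 \<or> r = 1 \<or> r = 2" unfolding r_def by auto
  have qd: "n div 3 = q" unfolding q_def ..
  have c0: ?thesis if r: "r = 0"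
  proof -
    have nm: "n mod 3 = 0" using r r_def by simp
    have "M3 a b c ^\<^sub>m r = 1\<^sub>m 3" using r by (simp add: M3_dim)
    thus ?thesis unfolding im nm by simp
  qed
  have c1: ?thesis if r: "r = 1"
  proof -
    have nm: "n mod 3 = 1" using r r_def by simp
    have "M3 a b c ^\<^sub>m r = M3 a b c" using r M3_carrier by simp
    thus ?thesis unfolding im nm qd
      by (simp add: M3_entries' pint_8 pint_Ints add.assoc)
  qed
  have c2: ?thesis if r: "r = 2"
  proof -
    have nm: "n mod 3 = 2" using r r_def by simp
    have "M3 a b c ^\<^sub>m r = M3 a b c * M3 a b c" using r M3_carrier by (simp add: numeral_2_eq_2)
    thus ?thesis unfolding im nm qd
      by (simp add: M3_sq' pint_8 pint_Ints add.assoc)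
  qed
  show ?thesis using r3 c0 c1 c2 by fast
qed



lemma ns_facts:
  fixes S :: "nat set" and a1 a2 :: nat
  assumes ns: "numerical_semigroup S"
    and m3: "multiplicity_ns S = 3"
    and a1: "a1 = (LEAST x. x \<in> S \<and> x mod 3 = 1)"
    and a2: "a2 = (LEAST x. x \<in> S \<and> x mod 3 = 2)"
  shows "S = {n. n mod 3 = 0 \<or> (n mod 3 = 1 \<and> n \<ge> a1) \<or> (n mod 3 = 2 \<and> n \<ge> a2)}"
    and "a1 mod 3 = 1" "a2 mod 3 = 2" "a1 \<ge> 4" "a2 \<ge> 5" "a2 \<le> 2 * a1" "a1 \<le> 2 * a2"
    and "3 \<in> S" "1 \<notin> S"
proof -
  have z: "0 \<in> S" and cl: "\<And>x y. x \<in> S \<Longrightarrow> y \<in> S \<Longrightarrow> x + y \<in> S" and fin: "finite (UNIV - S)"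
    using ns unfolding numerical_semigroup_def by auto
  obtain m where m: "\<forall>n\<in>UNIV - S. n \<le> m" using fin finite_nat_set_iff_bounded_le by blast
  have big: "n \<in> S" if "n > m" for n using m that by force
  have ex3: "\<exists>x. x \<in> S \<and> x \<noteq> 0" using big[of "m+1"] by auto
  have three: "3 \<in> S" and le3: "\<And>x. x \<in> S \<Longrightarrow> x \<noteq> 0 \<Longrightarrow> 3 \<le> x"
    using m3 LeastI_ex[OF ex3] Least_le[of "\<lambda>x. x \<in> S \<and> x \<noteq> 0"] unfolding multiplicity_ns_def by auto
  show "3 \<in> S" by (rule three)
  show "1 \<notin> S" using le3[of 1] by auto
  have mul3: "3 * k \<in> S" for k
    by (induction k) (use z three cl in \<open>auto simp: add.commute\<close>)
  have m1: "(3*m+1) mod 3 = 1" "(3*m+2) mod 3 = (2::nat)" by presburger+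
  have m2: "3*m+1 \<in> S" "3*m+2 \<in> S" using big[of "3*m+1"] big[of "3*m+2"] by simp_all
  have e1: "\<exists>x. x \<in> S \<and> x mod 3 = 1" using m1(1) m2(1) by blast
  have e2: "\<exists>x. x \<in> S \<and> x mod 3 = 2" using m1(2) m2(2) by blast
  have a1S: "a1 \<in> S" and a1m: "a1 mod 3 = 1" using LeastI_ex[OF e1] unfolding a1[symmetric] by auto
  have a2S: "a2 \<in> S" and a2m: "a2 mod 3 = 2" using LeastI_ex[OF e2] unfolding a2[symmetric] by auto
  have a1le: "a1 \<le> x" if "x \<in> S" "x mod 3 = 1" for x unfolding a1 using that by (intro Least_le) auto
  have a2le: "a2 \<le> x" if "x \<in> S" "x mod 3 = 2" for x unfolding a2 using that by (intro Least_le) auto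
  show "a1 mod 3 = 1" "a2 mod 3 = 2" by (fact a1m, fact a2m)
  have "3 \<le> a1" using le3[OF a1S] a1m by auto
  thus "a1 \<ge> 4" using a1m by (cases "a1 = 3") auto
  have "3 \<le> a2" using le3[OF a2S] a2m by auto
  thus "a2 \<ge> 5" using a2m by presburger
  show "a2 \<le> 2 * a1" using a2le[OF cl[OF a1S a1S]] a1m by presburger
  show "a1 \<le> 2 * a2" using a1le[OF cl[OF a2S a2S]] a2m by presburger
  show "S = {n. n mod 3 = 0 \<or> (n mod 3 = 1 \<and> n \<ge> a1) \<or> (n mod 3 = 2 \<and> n \<ge> a2)}"
  proof (rule Set.set_eqI, rule iffI)
    fix n assume nS: "n \<in> S"
    have "n mod 3 = 0 \<or> n mod 3 = 1 \<or> n mod 3 = 2" by auto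
    thus "n \<in> {n. n mod 3 = 0 \<or> (n mod 3 = 1 \<and> n \<ge> a1) \<or> (n mod 3 = 2 \<and> n \<ge> a2)}"
      using a1le[OF nS] a2le[OF nS] by auto
  next
    fix n assume "n \<in> {n. n mod 3 = 0 \<or> (n mod 3 = 1 \<and> n \<ge> a1) \<or> (n mod 3 = 2 \<and> n \<ge> a2)}"
    hence c: "n mod 3 = 0 \<or> (n mod 3 = 1 \<and> n \<ge> a1) \<or> (n mod 3 = 2 \<and> n \<ge> a2)" by simp
    show "n \<in> S"
    proof -
      { assume "n mod 3 = 0"
        hence "n = 3 * (n div 3)" by presburger
        hence ?thesis using mul3 by metis }
      moreover
      { assume h: "n mod 3 = 1 \<and> n \<ge> a1"
        hence "n = a1 + 3 * ((n - a1) div 3)" using a1m by presburger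
        hence ?thesis using cl[OF a1S mul3] by metis }
      moreover
      { assume h: "n mod 3 = 2 \<and> n \<ge> a2"
        hence "n = a2 + 3 * ((n - a2) div 3)" using a2m by presburger
        hence ?thesis using cl[OF a2S mul3] by metis }
      ultimately show ?thesis using c by meson
    qed
  qed
qed

theorem theorem3p4:
  fixes S :: "nat set" and a1 a2 :: nat
  assumes "numerical_semigroup S"
    and "multiplicity_ns S = 3"
    and "a1 = (LEAST x. x \<in> S \<and> x mod 3 = 1)"
    and "a2 = (LEAST x. x \<in> S \<and> x mod 3 = 2)"
  shows "(\<bar>int a1 - int a2\<bar> \<le> 2 \<longrightarrow> dim_mat S = 2)
       \<and> (\<bar>int a1 - int a2\<bar> > 2 \<longrightarrow> dim_mat S = 3)"
proof -
  note F = ns_facts[OF assms]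
  define T where "T = {n. n mod 3 = 0 \<or> (n mod 3 = 1 \<and> n \<ge> a1) \<or> (n mod 3 = 2 \<and> n \<ge> a2)}"
  have ST: "S = T" using F(1) unfolding T_def .
  have a1m: "a1 mod 3 = 1" and a2m: "a2 mod 3 = 2" and a14: "a1 \<ge> 4" and a25: "a2 \<ge> 5"
    and r1: "a2 \<le> 2 * a1" and r2: "a1 \<le> 2 * a2" and three: "3 \<in> S" and one: "1 \<notin> S"
    using F(2-9) by auto
  have no01: "\<not> (S = S_of A)" if "A \<in> carrier_mat d d" "d < 2" for A d
  proof
    assume SA: "S = S_of A"
    have "d = 0 \<or> d = 1" using that by auto
    then have "1 \<in> S_of A"
    proof
      assume "d = 0" thus ?thesis using dim0 that by auto
    next
      assume "d = 1" thus ?thesis using dim1[of A 1] that three SA by auto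
    qed
    thus False using one SA by simp
  qed
  have no2: "\<bar>int a1 - int a2\<bar> \<le> 2" if A: "A \<in> carrier_mat 2 2" and SA: "S = S_of A" for A
  proof -
    have 3: "3 \<in> S_of A" using three SA by simp
    have SAT: "S_of A = T" using SA ST by simp
    have m0: "(a1 - 1) mod 3 = 0" using a1m a14 by presburger
    have "a1 - 1 \<in> S_of A" unfolding SAT T_def using m0 by simp
    moreover have "Suc (a1 - 1) \<in> S_of A" unfolding SAT T_def using a1m a14 by simp
    ultimately have "a1 - 1 + 2 \<in> S_of A" using dim2[OF A 3, of "a1 - 1" 2] by simp
    moreover have "a1 - 1 + 2 = a1 + 1" using a14 by simp
    moreover have m1: "(a1 + 1) mod 3 = 2" using a1m by presburger
    ultimately have x1: "a2 \<le> a1 + 1" unfolding SAT T_def by simp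
    have m2: "(a2 + 1) mod 3 = 0" using a2m by presburger
    have "a2 \<in> S_of A" unfolding SAT T_def using a2m by simp
    moreover have "Suc a2 \<in> S_of A" unfolding SAT T_def using m2 by simp
    ultimately have "a2 + 2 \<in> S_of A" using dim2[OF A 3, of a2 2] by simp
    moreover have m3: "(a2 + 2) mod 3 = 1" using a2m by presburger
    ultimately have x2: "a1 \<le> a2 + 2" unfolding SAT T_def by simp
    show ?thesis using x1 x2 by linarith
  qed
  show ?thesis
  proof (intro conjI impI)
    assume le: "\<bar>int a1 - int a2\<bar> \<le> 2"
    define e where "e = int (min a1 a2)"
    have e1: "e \<ge> 1" unfolding e_def using a14 a25 by simp
    have cs: "a2 = a1 + 1 \<or> a1 = a2 + 2" using le a1m a2m by presburger
    have key: "(n mod 3 = 0 \<or> n mod 3 = 1 \<and> a1 \<le> n \<or> n mod 3 = 2 \<and> a2 \<le> n) \<longleftrightarrow> (n mod 3 = 0 \<or> e \<le> int n)" for n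
      using cs
    proof
      assume c: "a2 = a1 + 1"
      hence "e = int a1" unfolding e_def by simp
      thus ?thesis using c a1m by simp presburger
    next
      assume c: "a1 = a2 + 2"
      hence "e = int a2" unfolding e_def by simp
      thus ?thesis using c a2m by simp presburger
    qed
    have "S = S_of (M2 e)" unfolding ST S_of_M2[OF e1] T_def using key by simp
    hence ex: "\<exists>A \<in> carrier_mat 2 2. S = S_of A" using M2_carrier by blast
    show "dim_mat S = 2" unfolding dim_mat_def
    proof (rule Least_equality)
      show "\<exists>A \<in> carrier_mat 2 2. S = S_of A" by (rule ex)
    next
      fix d assume "\<exists>A \<in> carrier_mat d d. S = S_of A"
      then obtain A where "A \<in> carrier_mat d d" "S = S_of A" by blast
      thus "2 \<le> d" using no01 by force
    qed
  next
    assume gt: "\<bar>int a1 - int a2\<bar> > 2"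
    define j1 where "j1 = int (a1 div 3)"
    define j2 where "j2 = int (a2 div 3)"
    have a1e: "int a1 = 3 * j1 + 1" unfolding j1_def using a1m by presburger
    have a2e: "int a2 = 3 * j2 + 2" unfolding j2_def using a2m by presburger
    have i1: "j2 \<le> 2 * j1" using r1 a1e a2e by linarith
    have i2: "j1 \<le> 2 * j2 + 1" using r2 a1e a2e by linarith
    have abc: "(- 3 * j1) + (3 + 3 * j2) + (3 * j1 - 3 * j2) = 3" by simp
    have "S = S_of (M3 (- 3 * j1) (3 + 3 * j2) (3 * j1 - 3 * j2))"
    proof (rule Set.set_eqI)
      fix n
      define q where "q = int (n div 3)"
      have nn: "n = 3 * (n div 3) + n mod 3" by simp
      have nq: "int n = 3 * q + int (n mod 3)" unfolding q_def
        by (subst nn) (simp only: of_nat_add of_nat_mult of_nat_numeral)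
      have "n \<in> T \<longleftrightarrow> int_mat (M3 (- 3 * j1) (3 + 3 * j2) (3 * j1 - 3 * j2) ^\<^sub>m n)"
        unfolding S_of_M3[OF abc] q_def[symmetric] T_def mem_Collect_eq
      proof -
        have "n mod 3 = 0 \<or> n mod 3 = 1 \<or> n mod 3 = 2" by auto
        thus "(n mod 3 = 0 \<or> n mod 3 = 1 \<and> a1 \<le> n \<or> n mod 3 = 2 \<and> a2 \<le> n) =
          (n mod 3 = 0 \<or>
           n mod 3 = 1 \<and> 0 \<le> 3 * q + - 3 * j1 \<and> 0 \<le> 3 * q + (3 + 3 * j2) \<and> 0 \<le> 3 * q + (3 * j1 - 3 * j2) \<or>
           n mod 3 = 2 \<and> 0 \<le> 3 * q + - 3 * j1 + (3 * j1 - 3 * j2) \<and> 0 \<le> 3 * q + (3 + 3 * j2) + - 3 * j1 \<and>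
           0 \<le> 3 * q + (3 * j1 - 3 * j2) + (3 + 3 * j2))"
        proof (elim disjE)
          assume h: "n mod 3 = 0" thus ?thesis by simp
        next
          assume h: "n mod 3 = 1"
          have "a1 \<le> n \<longleftrightarrow> int a1 \<le> int n" by simp
          thus ?thesis using h nq a1e a2e i1 i2 by simp linarith
        next
          assume h: "n mod 3 = 2"
          have "a2 \<le> n \<longleftrightarrow> int a2 \<le> int n" by simp
          thus ?thesis using h nq a1e a2e i1 i2 by simp linarith
        qed
      qed
      thus "n \<in> S \<longleftrightarrow> n \<in> S_of (M3 (- 3 * j1) (3 + 3 * j2) (3 * j1 - 3 * j2))"
        unfolding ST S_of_def by simp
    qed
    hence ex: "\<exists>A \<in> carrier_mat 3 3. S = S_of A" using M3_carrier by blast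
    show "dim_mat S = 3" unfolding dim_mat_def
    proof (rule Least_equality)
      show "\<exists>A \<in> carrier_mat 3 3. S = S_of A" by (rule ex)
    next
      fix d assume "\<exists>A \<in> carrier_mat d d. S = S_of A"
      then obtain A where A: "A \<in> carrier_mat d d" "S = S_of A" by blast
      show "3 \<le> d"
      proof (rule ccontr)
        assume "\<not> 3 \<le> d"
        hence "d < 2 \<or> d = 2" by auto
        thus False
        proof
          assume "d < 2" thus False using no01 A by blast
        next
          assume "d = 2" thus False using no2 A gt by force
        qed
      qed
    qed
  qed
qed


end
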